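(* Let $(S,\mu)$ be a $\sigma$-finite measure space. Every semiuniformly integrable set of nonnegative graphons in $L^1(S\times S,\mu\times\mu)$ is relatively complete for the cut norm, i.e. every $\|\cdot\|_\square$-Cauchy sequence in the set converges in $\|\cdot\|_\square$ to some graphon on $(S,\mu)$.
   Context: A graphon on $(S,\mu)$ is a symmetric function $W\in L^1(S\times S,\mu\times\mu)$; functions equal a.e. are identified. Cut norm: $\|F\|_\square:=\sup_{T,U}|\int_{T\times U}F\,d\mu\,d\mu|$ over measurable $T,U\subseteq S$. A set $\mathcal A$ of integrable functions is semiuniformly integrable if $\sup_{F\in\mathcal A}\int_{|F|>B}|F|\to0$ as $B\to\infty$. *)

theory Defs
  imports "HOL-Analysis.Analysis"
begin

text \<open>A graphon on (S,mu): a symmetric (a.e.) integrable real function on S x S.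
  Functions are not quotiented; the cut norm below is insensitive to a.e. changes.\<close>
definition graphon :: "'a measure \<Rightarrow> ('a \<times> 'a \<Rightarrow> real) \<Rightarrow> bool" where
  "graphon M W \<longleftrightarrow> integrable (M \<Otimes>\<^sub>M M) W \<and>
     (AE z in M \<Otimes>\<^sub>M M. W z = W (snd z, fst z))"

definition cut_norm :: "'a measure \<Rightarrow> ('a \<times> 'a \<Rightarrow> real) \<Rightarrow> real" where
  "cut_norm M F = (SUP TU \<in> sets M \<times> sets M.
      \<bar>LINT z : fst TU \<times> snd TU | M \<Otimes>\<^sub>M M. F z\<bar>)"

definition semiuniformly_integrable :: "'a measure \<Rightarrow> ('a \<Rightarrow> real) set \<Rightarrow> bool" where
  "semiuniformly_integrable N A \<longleftrightarrow>
     (\<forall>e>0. \<exists>B0. \<forall>B\<ge>B0. \<forall>F\<in>A.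
        (LINT z : {z \<in> space N. \<bar>F z\<bar> > B} | N. \<bar>F z\<bar>) \<le> e)"

definition cut_cauchy :: "'a measure \<Rightarrow> (nat \<Rightarrow> 'a \<times> 'a \<Rightarrow> real) \<Rightarrow> bool" where
  "cut_cauchy M W \<longleftrightarrow>
     (\<forall>e>0. \<exists>N. \<forall>m\<ge>N. \<forall>n\<ge>N. cut_norm M (\<lambda>z. W m z - W n z) < e)"

end

theory Submission
  imports Defs
begin


lemma unif_conv:
  fixes a :: "nat \<Rightarrow> real" and b :: "nat \<Rightarrow> nat \<Rightarrow> real"
  assumes b: "\<And>k. convergent (b k)"
    and u: "\<And>e. e > 0 \<Longrightarrow> \<exists>k0. \<forall>k\<ge>k0. \<forall>n. \<bar>a n - b k n\<bar> \<le> e"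
  shows "convergent a" "(\<lambda>k. lim (b k)) \<longlonglongrightarrow> lim a"
proof -
  show ca: "convergent a"
  proof (rule Cauchy_convergent, rule metric_CauchyI)
    fix e :: real assume e: "e > 0"
    obtain k0 where k0: "\<forall>k\<ge>k0. \<forall>n. \<bar>a n - b k n\<bar> \<le> e/3" using u[of "e/3"] e by auto
    have "Cauchy (b k0)" using b convergent_Cauchy by blast
    then obtain N where N: "\<forall>m\<ge>N. \<forall>n\<ge>N. dist (b k0 m) (b k0 n) < e/3"
      using e by (metis metric_CauchyD zero_less_divide_iff zero_less_numeral)
    have "dist (a m) (a n) < e" if "m \<ge> N" "n \<ge> N" for m n
      using N[rule_format, of m n] that k0[rule_format, of k0 m] k0[rule_format, of k0 n]
      unfolding dist_real_def by arith
    then show "\<exists>N. \<forall>m\<ge>N. \<forall>n\<ge>N. dist (a m) (a n) < e" by blast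
  qed
  show "(\<lambda>k. lim (b k)) \<longlonglongrightarrow> lim a"
  proof (rule LIMSEQ_I)
    fix e :: real assume e: "e > 0"
    obtain k0 where k0: "\<forall>k\<ge>k0. \<forall>n. \<bar>a n - b k n\<bar> \<le> e/2" using u[of "e/2"] e by auto
    have "norm (lim (b k) - lim a) < e" if "k \<ge> k0" for k
    proof -
      have "(\<lambda>n. \<bar>a n - b k n\<bar>) \<longlonglongrightarrow> \<bar>lim a - lim (b k)\<bar>"
        using ca b[of k] by (intro tendsto_intros) (auto simp: convergent_LIMSEQ_iff)
      then have "\<bar>lim a - lim (b k)\<bar> \<le> e/2"
        by (rule LIMSEQ_le_const2) (use k0 that in auto)
      then show ?thesis using e by (simp add: abs_minus_commute)
    qed
    then show "\<exists>no. \<forall>k\<ge>no. norm (lim (b k) - lim a) < e" by blast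
  qed
qed

locale cs =
  fixes M :: "'a measure" and W :: "nat \<Rightarrow> 'a \<times> 'a \<Rightarrow> real"
  assumes sfM: "sigma_finite_measure M"
  and intW: "\<And>n. integrable (M \<Otimes>\<^sub>M M) (W n)"
  and symW: "\<And>n. AE z in M \<Otimes>\<^sub>M M. W n z = W n (snd z, fst z)"
  and nnW: "\<And>n. AE z in M \<Otimes>\<^sub>M M. W n z \<ge> 0"
  and ui: "\<And>e. e > 0 \<Longrightarrow> \<exists>B\<ge>0. \<forall>n. (\<integral>z. indicator {z\<in>space (M \<Otimes>\<^sub>M M). \<bar>W n z\<bar> > B} z * \<bar>W n z\<bar> \<partial>(M \<Otimes>\<^sub>M M)) \<le> e"
  and cc: "cut_cauchy M W"
begin

sublocale PS: pair_sigma_finite M M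
  using sfM by (simp add: pair_sigma_finite_def)

abbreviation "P \<equiv> M \<Otimes>\<^sub>M M"

definition I where "I E n = (\<integral>z. indicator E z * W n z \<partial>P)"

lemma intI: "E \<in> sets P \<Longrightarrow> integrable P (\<lambda>z. indicator E z * W n z)"
  using integrable_mult_indicator[of E P "W n"] intW by simp

lemma cut_bound:
  assumes F: "integrable P F" and T: "T \<in> sets M" and U: "U \<in> sets M"
  shows "\<bar>\<integral>z. indicator (T \<times> U) z * F z \<partial>P\<bar> \<le> cut_norm M F"
proof -
  have b: "\<bar>\<integral>z. indicator (T' \<times> U') z * F z \<partial>P\<bar> \<le> (\<integral>z. \<bar>F z\<bar> \<partial>P)"
    if "T' \<in> sets M" "U' \<in> sets M" for T' U'
  proof -
    have "\<bar>\<integral>z. indicator (T' \<times> U') z * F z \<partial>P\<bar> \<le> (\<integral>z. \<bar>indicator (T' \<times> U') z * F z\<bar> \<partial>P)"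
      using integral_abs_bound by blast
    also have "\<dots> \<le> (\<integral>z. \<bar>F z\<bar> \<partial>P)"
      apply (rule integral_mono)
      using integrable_mult_indicator[of "T' \<times> U'" P F] F that
        apply (auto simp: indicator_def intro!: integrable_abs F)
      done
    finally show ?thesis .
  qed
  show ?thesis
    unfolding cut_norm_def set_lebesgue_integral_def
    apply (rule cSUP_upper2[where x="(T,U)"])
    using T U b by (auto intro!: bdd_aboveI2[where M="\<integral>z. \<bar>F z\<bar> \<partial>P"])
qed

lemma I_nonneg: "E \<in> sets P \<Longrightarrow> 0 \<le> I E n"
  unfolding I_def using nnW[of n] by (auto intro!: integral_nonneg_AE split: split_indicator)

lemma I_Un: assumes "E \<in> sets P" "F \<in> sets P" "E \<inter> F = {}"
  shows "I (E \<union> F) n = I E n + I F n"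
proof -
  have "(\<lambda>z. indicator (E \<union> F) z * W n z) = (\<lambda>z. indicator E z * W n z + indicator F z * W n z)"
    using assms(3) by (auto simp: indicator_def fun_eq_iff)
  then show ?thesis unfolding I_def using intI assms by simp
qed

lemma I_diff: assumes "E \<in> sets P" "F \<in> sets P" "F \<subseteq> E"
  shows "I (E - F) n = I E n - I F n"
proof -
  have "E = (E - F) \<union> F" using assms by auto
  then have "I E n = I (E - F) n + I F n" using I_Un[of "E - F" F n] assms by auto
  then show ?thesis by simp
qed

lemma I_mono: assumes "E \<in> sets P" "F \<in> sets P" "E \<subseteq> F"
  shows "I E n \<le> I F n"
  using I_diff[OF assms(2,1,3), of n] I_nonneg[of "F - E" n] assms by auto

lemma I_rect: assumes "T \<in> sets M" "U \<in> sets M"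
  shows "\<bar>I (T \<times> U) n - I (T \<times> U) m\<bar> \<le> cut_norm M (\<lambda>z. W n z - W m z)"
proof -
  have TU: "T \<times> U \<in> sets P" using assms by auto
  have "I (T \<times> U) n - I (T \<times> U) m = (\<integral>z. indicator (T \<times> U) z * (W n z - W m z) \<partial>P)"
    unfolding I_def using intI[OF TU, of n] intI[OF TU, of m]
    by (simp add: right_diff_distrib)
  then show ?thesis using cut_bound[OF _ assms, of "\<lambda>z. W n z - W m z"] intW by auto
qed

lemma cauchyI: assumes "e > 0"
  shows "\<exists>N. \<forall>m\<ge>N. \<forall>n\<ge>N. \<forall>T\<in>sets M. \<forall>U\<in>sets M. \<bar>I (T \<times> U) n - I (T \<times> U) m\<bar> < e"
proof -
  obtain N where N: "\<forall>m\<ge>N. \<forall>n\<ge>N. cut_norm M (\<lambda>z. W m z - W n z) < e"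
    using cc assms unfolding cut_cauchy_def by blast
  show ?thesis
    apply (rule exI[of _ N])
    using N I_rect by (meson le_less_trans)
qed

lemma tight: assumes e: "e > 0"
  shows "\<exists>K\<in>sets P. emeasure P K \<noteq> \<infinity> \<and> (\<forall>n. I (space P - K) n \<le> e)"
proof -
  obtain A where A: "range A \<subseteq> sets M" "(\<Union>i. A i) = space M" "\<And>i. emeasure M (A i) \<noteq> \<infinity>" "incseq A"
    using sigma_finite_measure.sigma_finite_incseq[OF sfM] by metis
  define K where "K j = A j \<times> A j" for j
  have Ks: "K j \<in> sets P" for j using A(1) unfolding K_def by auto
  have Kf: "emeasure P (K j) \<noteq> \<infinity>" for j
    unfolding K_def using A(1,3) sigma_finite_measure.emeasure_pair_measure_Times[OF sfM, of "A j" M "A j"]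
    by (auto simp: ennreal_mult_eq_top_iff)
  have Ksub: "K j \<subseteq> space P" for j using sets.sets_into_space[OF Ks] .
  have lim: "(\<lambda>j. I (space P - K j) n) \<longlonglongrightarrow> 0" for n
  proof -
    have "(\<lambda>j. \<integral>z. indicator (space P - K j) z * W n z \<partial>P) \<longlonglongrightarrow> (\<integral>z. 0 \<partial>P)"
    proof (rule integral_dominated_convergence[where w="\<lambda>z. \<bar>W n z\<bar>"])
      show "(\<lambda>z. 0::real) \<in> borel_measurable P" by simp
      show "(\<lambda>z. indicator (space P - K j) z * W n z) \<in> borel_measurable P" for j
        using intI[of "space P - K j" n] Ks by auto
      show "integrable P (\<lambda>z. \<bar>W n z\<bar>)" using intW by auto
      show "AE z in P. norm (indicator (space P - K j) z * W n z) \<le> \<bar>W n z\<bar>" for j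
        by (auto simp: indicator_def)
      show "AE z in P. (\<lambda>j. indicator (space P - K j) z * W n z) \<longlonglongrightarrow> 0"
      proof (rule AE_I2)
        fix z assume z: "z \<in> space P"
        then obtain a b where ab: "z = (a, b)" "a \<in> space M" "b \<in> space M"
          by (auto simp: space_pair_measure)
        obtain i1 where "a \<in> A i1" using ab A(2) by auto
        obtain i2 where "b \<in> A i2" using ab A(2) by auto
        then have "\<forall>j\<ge>max i1 i2. z \<in> K j"
          using \<open>a \<in> A i1\<close> A(4) ab unfolding K_def incseq_def
          by (metis SigmaI max.bounded_iff subsetD)
        then have "eventually (\<lambda>j. indicator (space P - K j) z * W n z = 0) sequentially"
          unfolding eventually_sequentially by (intro exI[of _ "max i1 i2"]) auto
        then show "(\<lambda>j. indicator (space P - K j) z * W n z) \<longlonglongrightarrow> 0"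
          by (rule tendsto_eventually)
      qed
    qed
    then show ?thesis unfolding I_def by simp
  qed
  obtain N where N: "\<forall>m\<ge>N. \<forall>n\<ge>N. \<forall>T\<in>sets M. \<forall>U\<in>sets M. \<bar>I (T \<times> U) n - I (T \<times> U) m\<bar> < e/4"
    using cauchyI[of "e/4"] e by auto
  have "\<forall>k\<in>{..N}. eventually (\<lambda>j. I (space P - K j) k < e/4) sequentially"
    using lim e by (metis order_tendstoD(2) zero_less_divide_iff zero_less_numeral)
  then have "eventually (\<lambda>j. \<forall>k\<in>{..N}. I (space P - K j) k < e/4) sequentially"
    by (rule eventually_ball_finite[rotated]) simp
  then obtain j where j: "\<forall>k\<le>N. I (space P - K j) k < e/4"
    unfolding eventually_sequentially by auto
  have "I (space P - K j) n \<le> e" for n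
  proof (cases "n \<le> N")
    case True then show ?thesis using j e by force
  next
    case False
    have sp: "space P = space M \<times> space M" by (simp add: space_pair_measure)
    have d: "I (space P - K j) k = I (space M \<times> space M) k - I (A j \<times> A j) k" for k
      using I_diff[of "space P" "K j" k] Ks Ksub unfolding K_def sp by auto
    have "\<bar>I (space M \<times> space M) n - I (space M \<times> space M) N\<bar> < e/4"
      using N False by auto
    moreover have "\<bar>I (A j \<times> A j) n - I (A j \<times> A j) N\<bar> < e/4"
      using N False A(1) by auto
    moreover have "I (space P - K j) N < e/4" using j by auto
    ultimately show ?thesis using d[of n] d[of N] e by linarith
  qed
  then show ?thesis using Ks Kf by blast
qed

lemma Wmeas[measurable]: "W n \<in> borel_measurable P"
  using intW by auto

lemma equi: assumes e: "e > 0"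
  shows "\<exists>B\<ge>0. \<forall>n. \<forall>E\<in>sets P. emeasure P E \<noteq> \<infinity> \<longrightarrow> I E n \<le> B * measure P E + e"
proof -
  obtain B where B: "B \<ge> 0" "\<forall>n. (\<integral>z. indicator {z\<in>space P. \<bar>W n z\<bar> > B} z * \<bar>W n z\<bar> \<partial>P) \<le> e"
    using ui[OF e] by blast
  have "I E n \<le> B * measure P E + e" if E: "E \<in> sets P" "emeasure P E \<noteq> \<infinity>" for E n
  proof -
    define S where "S = {z\<in>space P. \<bar>W n z\<bar> > B}"
    have S: "S \<in> sets P" unfolding S_def by measurable
    have i1: "integrable P (\<lambda>z. B * indicator E z)"
      using E by (simp add: less_top)
    have i2: "integrable P (\<lambda>z. indicator S z * \<bar>W n z\<bar>)"
      using integrable_mult_indicator[of S P "\<lambda>z. \<bar>W n z\<bar>"] S intW by auto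
    have "I E n \<le> (\<integral>z. B * indicator E z + indicator S z * \<bar>W n z\<bar> \<partial>P)"
      unfolding I_def
    proof (rule integral_mono)
      show "integrable P (\<lambda>z. indicator E z * W n z)" using intI E by auto
      show "integrable P (\<lambda>z. B * indicator E z + indicator S z * \<bar>W n z\<bar>)" using i1 i2 by auto
      fix z assume z: "z \<in> space P"
      show "indicator E z * W n z \<le> B * indicator E z + indicator S z * \<bar>W n z\<bar>"
        using z B(1) unfolding S_def by (auto simp: indicator_def)
    qed
    also have "\<dots> = B * measure P E + (\<integral>z. indicator S z * \<bar>W n z\<bar> \<partial>P)"
      using i1 i2 E by (simp add: Int_absorb2 sets.sets_into_space)
    also have "\<dots> \<le> B * measure P E + e" using B(2) unfolding S_def by auto
    finally show ?thesis .
  qed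
  then show ?thesis using B(1) by blast
qed

lemma UT: assumes R: "\<And>k. R k \<in> sets P" "decseq R" "(\<Inter>k. R k) = {}" and e: "e > 0"
  shows "\<exists>k0. \<forall>k\<ge>k0. \<forall>n. I (R k) n \<le> e"
proof -
  obtain K where K: "K \<in> sets P" "emeasure P K \<noteq> \<infinity>" "\<forall>n. I (space P - K) n \<le> e/3"
    using tight[of "e/3"] e by auto
  obtain B where B: "B \<ge> 0" "\<forall>n. \<forall>E\<in>sets P. emeasure P E \<noteq> \<infinity> \<longrightarrow> I E n \<le> B * measure P E + e/3"
    using equi[of "e/3"] e by auto
  have fin: "emeasure P (R k \<inter> K) \<noteq> \<infinity>" for k
    using K emeasure_mono[of "R k \<inter> K" K P] by (auto simp: top_unique)
  have "(\<lambda>k. measure P (R k \<inter> K)) \<longlonglongrightarrow> measure P (\<Inter>k. R k \<inter> K)"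
    apply (rule Lim_measure_decseq)
    using R K fin by (auto simp: decseq_def)
  moreover have "(\<Inter>k. R k \<inter> K) = {}" using R(3) by auto
  ultimately have "(\<lambda>k. measure P (R k \<inter> K)) \<longlonglongrightarrow> 0" by simp
  then have "(\<lambda>k. B * measure P (R k \<inter> K)) \<longlonglongrightarrow> B * 0"
    by (rule tendsto_mult_left)
  then have "eventually (\<lambda>k. B * measure P (R k \<inter> K) < e/3) sequentially"
    using e order_tendstoD(2)[of "\<lambda>k. B * measure P (R k \<inter> K)" 0 sequentially "e/3"] by simp
  then obtain k0 where k0: "\<forall>k\<ge>k0. B * measure P (R k \<inter> K) < e/3"
    unfolding eventually_sequentially by auto
  have "I (R k) n \<le> e" if "k \<ge> k0" for k n
  proof -
    have "R k = (R k \<inter> K) \<union> (R k - K)" by auto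
    then have "I (R k) n = I (R k \<inter> K) n + I (R k - K) n"
      using I_Un[of "R k \<inter> K" "R k - K" n] R K by auto
    moreover have "I (R k - K) n \<le> I (space P - K) n"
      using I_mono[of "R k - K" "space P - K" n] R K sets.sets_into_space by blast
    moreover have "I (R k \<inter> K) n \<le> B * measure P (R k \<inter> K) + e/3"
      using B(2) fin R K by auto
    moreover have "I (space P - K) n \<le> e/3" using K(3) by auto
    moreover have "B * measure P (R k \<inter> K) < e/3" using k0 that by auto
    ultimately show ?thesis by linarith
  qed
  then show ?thesis by blast
qed

lemma I_fin_union: fixes A :: "nat \<Rightarrow> ('a \<times> 'a) set" assumes "disjoint_family A" "\<And>i. A i \<in> sets P"
  shows "I (\<Union>i<k. A i) n = (\<Sum>i<k. I (A i) n)"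
proof (induction k)
  case 0 then show ?case by (simp add: I_def)
next
  case (Suc k)
  have "(\<Union>i<Suc k. A i) = (\<Union>i<k. A i) \<union> A k" by (auto simp: lessThan_Suc)
  moreover have "(\<Union>i<k. A i) \<inter> A k = {}"
  proof -
    have "A i \<inter> A k = {}" if "i < k" for i
      using assms(1) that unfolding disjoint_family_on_def by auto
    then show ?thesis by blast
  qed
  ultimately show ?case using I_Un[of "\<Union>i<k. A i" "A k" n] assms(2) Suc by auto
qed

lemma I_tail: fixes A :: "nat \<Rightarrow> ('a \<times> 'a) set" assumes A: "disjoint_family A" "\<And>i. A i \<in> sets P" and e: "e > 0"
  shows "\<exists>k0. \<forall>k\<ge>k0. \<forall>n. \<bar>I (\<Union>i. A i) n - (\<Sum>i<k. I (A i) n)\<bar> \<le> e"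
proof -
  define R where "R k = (\<Union>i. A i) - (\<Union>i<k. A i)" for k
  have U1: "(\<Union>i. A i) \<in> sets P" using A(2) by (intro sets.countable_UN) auto
  have U2: "(\<Union>i<k. A i) \<in> sets P" for k using A(2) by (intro sets.finite_UN) auto
  have Rs: "R k \<in> sets P" for k unfolding R_def using U1 U2 by auto
  have "decseq R" unfolding R_def decseq_def by auto
  moreover have "(\<Inter>k. R k) = {}"
  proof -
    have "z \<notin> R (Suc j)" if "z \<in> A j" for z j using that unfolding R_def by auto
    then show ?thesis unfolding R_def by auto
  qed
  ultimately obtain k0 where k0: "\<forall>k\<ge>k0. \<forall>n. I (R k) n \<le> e" using UT[of R e] Rs e by auto
  have "\<bar>I (\<Union>i. A i) n - (\<Sum>i<k. I (A i) n)\<bar> \<le> e" if "k \<ge> k0" for k n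
  proof -
    have "I (R k) n = I (\<Union>i. A i) n - I (\<Union>i<k. A i) n"
      unfolding R_def using A(2) by (intro I_diff) auto
    then show ?thesis using I_fin_union[OF A, of k n] k0[rule_format, OF that, of n] I_nonneg[OF Rs, of k n] by auto
  qed
  then show ?thesis by blast
qed

lemma conv: assumes "E \<in> sets P" shows "convergent (\<lambda>n. I E n)"
proof -
  let ?G = "{a \<times> b | a b. a \<in> sets M \<and> b \<in> sets M}"
  have E: "E \<in> sigma_sets (space M \<times> space M) ?G" using assms by (simp add: sets_pair_measure)
  have G: "?G \<subseteq> Pow (space M \<times> space M)" using sets.sets_into_space by blast
  show ?thesis
  proof (rule sigma_sets_induct_disjoint[OF Int_stable_pair_measure_generator G E, where P="\<lambda>E. convergent (\<lambda>n. I E n)"])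
    fix A assume "A \<in> ?G"
    then obtain a b where ab: "A = a \<times> b" "a \<in> sets M" "b \<in> sets M" by auto
    show "convergent (\<lambda>n. I A n)"
    proof (rule Cauchy_convergent, rule metric_CauchyI)
      fix e :: real assume "e > 0"
      then obtain N where N: "\<forall>m\<ge>N. \<forall>n\<ge>N. \<forall>T\<in>sets M. \<forall>U\<in>sets M. \<bar>I (T \<times> U) n - I (T \<times> U) m\<bar> < e"
        using cauchyI by blast
      then show "\<exists>N. \<forall>m\<ge>N. \<forall>n\<ge>N. dist (I A m) (I A n) < e"
        using ab by (metis dist_real_def abs_minus_commute)
    qed
  next
    show "convergent (\<lambda>n. I {} n)" by (simp add: I_def convergent_const)
  next
    fix A assume compl: "A \<in> sigma_sets (space M \<times> space M) ?G" "convergent (\<lambda>n. I A n)"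
    then have As: "A \<in> sets P" by (simp add: sets_pair_measure)
    have sp: "space P = space M \<times> space M" by (simp add: space_pair_measure)
    have "I (space M \<times> space M - A) n = I (space M \<times> space M) n - I A n" for n
      using I_diff[of "space P" A n] As sets.sets_into_space[OF As] sp by auto
    moreover have "convergent (\<lambda>n. I (space M \<times> space M) n)"
    proof (rule Cauchy_convergent, rule metric_CauchyI)
      fix e :: real assume "e > 0"
      then obtain N where N: "\<forall>m\<ge>N. \<forall>n\<ge>N. \<forall>T\<in>sets M. \<forall>U\<in>sets M. \<bar>I (T \<times> U) n - I (T \<times> U) m\<bar> < e"
        using cauchyI by blast
      then show "\<exists>N. \<forall>m\<ge>N. \<forall>n\<ge>N. dist (I (space M \<times> space M) m) (I (space M \<times> space M) n) < e"
        by (metis dist_real_def abs_minus_commute sets.top)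
    qed
    ultimately show "convergent (\<lambda>n. I (space M \<times> space M - A) n)" using compl(2) by (simp add: convergent_diff)
  next
    fix A :: "nat \<Rightarrow> _" assume union: "disjoint_family A" "range A \<subseteq> sigma_sets (space M \<times> space M) ?G"
      "\<And>i. convergent (\<lambda>n. I (A i) n)"
    then have As: "\<And>i. A i \<in> sets P" by (auto simp: sets_pair_measure)
    show "convergent (\<lambda>n. I (\<Union>i. A i) n)"
    proof (rule unif_conv(1)[of "\<lambda>k n. \<Sum>i<k. I (A i) n"])
      show "convergent (\<lambda>n. \<Sum>i<k. I (A i) n)" for k
        using union(3) by (intro convergent_sum) auto
      show "\<exists>k0. \<forall>k\<ge>k0. \<forall>n. \<bar>I (\<Union>i. A i) n - (\<Sum>i<k. I (A i) n)\<bar> \<le> e" if "e > 0" for e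
        using I_tail[OF union(1) As that] .
    qed
  qed
qed

definition nu where "nu E = lim (\<lambda>n. I E n)"

lemma nu_lim: "E \<in> sets P \<Longrightarrow> (\<lambda>n. I E n) \<longlonglongrightarrow> nu E"
  unfolding nu_def using conv convergent_LIMSEQ_iff by blast

lemma nu_nonneg: "E \<in> sets P \<Longrightarrow> 0 \<le> nu E"
  by (rule LIMSEQ_le_const[OF nu_lim]) (auto intro: I_nonneg)

lemma nu_empty: "nu {} = 0"
  unfolding nu_def I_def by simp

lemma nu_sums: assumes A: "disjoint_family A" "\<And>i::nat. A i \<in> sets P"
  shows "(\<lambda>i. nu (A i)) sums nu (\<Union>i. A i)"
proof -
  have "(\<lambda>k. lim (\<lambda>n. \<Sum>i<k. I (A i) n)) \<longlonglongrightarrow> lim (\<lambda>n. I (\<Union>i. A i) n)"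
  proof (rule unif_conv(2))
    show "convergent (\<lambda>n. \<Sum>i<k. I (A i) n)" for k
      using conv A(2) by (intro convergent_sum) auto
    show "\<exists>k0. \<forall>k\<ge>k0. \<forall>n. \<bar>I (\<Union>i. A i) n - (\<Sum>i<k. I (A i) n)\<bar> \<le> e" if "e > 0" for e
      using I_tail[OF A that] .
  qed
  moreover have "lim (\<lambda>n. \<Sum>i<k. I (A i) n) = (\<Sum>i<k. nu (A i))" for k
    using A(2) by (intro limI tendsto_sum nu_lim) auto
  ultimately show ?thesis unfolding sums_def nu_def[of "\<Union>i. A i"] by simp
qed

lemma nu_null: assumes "E \<in> null_sets P" shows "nu E = 0"
proof -
  have "I E n = 0" for n
  proof -
    have "AE z in P. indicator E z * W n z = 0"
      using AE_not_in[OF assms] by eventually_elim auto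
    then show ?thesis unfolding I_def by (simp add: integral_eq_zero_AE)
  qed
  then have "I E = (\<lambda>n. 0)" by (simp add: fun_eq_iff)
  then show ?thesis unfolding nu_def by (simp add: limI)
qed

definition N where "N = measure_of (space P) (sets P) (\<lambda>E. ennreal (nu E))"

lemma N_sets: "sets N = sets P"
  unfolding N_def by (simp add: sets.space_closed)

lemma N_emeasure: assumes "E \<in> sets P" shows "emeasure N E = ennreal (nu E)"
  unfolding N_def
proof (rule emeasure_measure_of_sigma[OF sets.sigma_algebra_axioms _ _ assms])
  show "positive (sets P) (\<lambda>E. ennreal (nu E))" unfolding positive_def by (simp add: nu_empty)
  show "countably_additive (sets P) (\<lambda>E. ennreal (nu E))"
    unfolding countably_additive_def
  proof (intro allI impI)
    fix A :: "nat \<Rightarrow> _" assume A: "range A \<subseteq> sets P" "disjoint_family A" "\<Union> (range A) \<in> sets P"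
    then have s: "(\<lambda>i. nu (A i)) sums nu (\<Union>i. A i)" using nu_sums by auto
    have "(\<Sum>i. ennreal (nu (A i))) = ennreal (\<Sum>i. nu (A i))"
      using A s by (intro suminf_ennreal2) (auto intro: nu_nonneg sums_summable)
    then show "(\<Sum>i. ennreal (nu (A i))) = ennreal (nu (\<Union> (range A)))"
      using s sums_unique by metis
  qed
qed

lemma density_exists:
  "\<exists>V. integrable P V \<and> (\<forall>x. 0 \<le> V x) \<and> (\<forall>E\<in>sets P. (\<integral>z. indicator E z * V z \<partial>P) = nu E)"
proof -
  have sfP: "sigma_finite_measure P" using sigma_finite_pair_measure[OF sfM sfM] .
  have ac: "absolutely_continuous P N"
    unfolding absolutely_continuous_def
  proof
    fix E assume E: "E \<in> null_sets P"
    then show "E \<in> null_sets N"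
      using N_emeasure[of E] nu_null[OF E] N_sets by (auto simp: null_sets_def)
  qed
  obtain f where f: "f \<in> borel_measurable P" "density P f = N"
    using sigma_finite_measure.Radon_Nikodym[OF sfP ac N_sets] by blast
  have dens: "(\<integral>\<^sup>+z. f z * indicator E z \<partial>P) = ennreal (nu E)" if "E \<in> sets P" for E
    using emeasure_density[OF f(1) that] f(2) N_emeasure[OF that] by simp
  have "(\<integral>\<^sup>+z. f z \<partial>P) = (\<integral>\<^sup>+z. f z * indicator (space P) z \<partial>P)"
    by (intro nn_integral_cong) auto
  also have "\<dots> \<noteq> \<infinity>" using dens[of "space P"] by simp
  finally have fin: "(\<integral>\<^sup>+z. f z \<partial>P) \<noteq> \<infinity>" .
  have AEf: "AE z in P. f z \<noteq> \<infinity>" using nn_integral_PInf_AE[OF f(1) fin] .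
  define V where "V z = enn2real (f z)" for z
  have Vm[measurable]: "V \<in> borel_measurable P" unfolding V_def using f(1) by measurable
  have Vpos: "0 \<le> V x" for x unfolding V_def by simp
  have eqf: "AE z in P. ennreal (V z) = f z" using AEf unfolding V_def
    by eventually_elim (simp add: ennreal_enn2real_if)
  have intV: "integrable P V"
  proof (rule integrableI_nonneg)
    show "(\<integral>\<^sup>+x. ennreal (V x) \<partial>P) < \<infinity>"
      using fin eqf by (simp add: nn_integral_cong_AE less_top)
  qed (auto simp: Vpos)
  have "(\<integral>z. indicator E z * V z \<partial>P) = nu E" if E: "E \<in> sets P" for E
  proof -
    have "(\<integral>z. indicator E z * V z \<partial>P) = enn2real (\<integral>\<^sup>+z. ennreal (indicator E z * V z) \<partial>P)"
      using E by (intro integral_eq_nn_integral) (auto simp: Vpos)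
    also have "(\<integral>\<^sup>+z. ennreal (indicator E z * V z) \<partial>P) = (\<integral>\<^sup>+z. f z * indicator E z \<partial>P)"
      by (intro nn_integral_cong_AE, use eqf in eventually_elim) (auto simp: indicator_def)
    finally show ?thesis using dens[OF E] nu_nonneg[OF E] by simp
  qed
  then show ?thesis using intV Vpos by blast
qed

lemma swap_int: fixes f :: "'a \<times> 'a \<Rightarrow> real" assumes "f \<in> borel_measurable P"
  shows "(\<integral>z. f (snd z, fst z) \<partial>P) = (\<integral>z. f z \<partial>P)"
proof -
  have e: "(\<lambda>(x,y). f (y,x)) = (\<lambda>z. f (snd z, fst z))" by (auto simp: fun_eq_iff)
  have "(\<integral>z. f (snd z, fst z) \<partial>P) = (\<integral>(x,y). f (y,x) \<partial>P)"
    by (simp only: e)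
  also have "\<dots> = (\<integral>z. f z \<partial>P)" using PS.integral_product_swap[OF assms] .
  finally show ?thesis .
qed

lemma I_swap: assumes "T \<in> sets M" "U \<in> sets M" shows "I (U \<times> T) n = I (T \<times> U) n"
proof -
  have "I (U \<times> T) n = (\<integral>z. indicator (U \<times> T) (snd z, fst z) * W n (snd z, fst z) \<partial>P)"
    unfolding I_def using assms intI[of "U \<times> T" n]
    by (intro swap_int[symmetric, where f="\<lambda>z. indicator (U \<times> T) z * W n z"]) auto
  also have "\<dots> = (\<integral>z. indicator (T \<times> U) z * W n z \<partial>P)"
  proof (rule integral_cong_AE)
    have m: "(\<lambda>z. indicator (U \<times> T) z * W n z) \<in> borel_measurable P"
      using intI[of "U \<times> T" n] assms by auto
    show "(\<lambda>z. indicator (U \<times> T) (snd z, fst z) * W n (snd z, fst z)) \<in> borel_measurable P"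
      using measurable_compose[OF measurable_pair_swap' m] by (simp add: case_prod_beta)
    show "(\<lambda>z. indicator (T \<times> U) z * W n z) \<in> borel_measurable P"
      using intI[of "T \<times> U" n] assms by auto
    show "AE z in P. indicator (U \<times> T) (snd z, fst z) * W n (snd z, fst z) = indicator (T \<times> U) z * W n z"
      using symW[of n] by eventually_elim (auto simp: indicator_def)
  qed
  finally show ?thesis unfolding I_def .
qed

lemma nu_swap: assumes "T \<in> sets M" "U \<in> sets M" shows "nu (U \<times> T) = nu (T \<times> U)"
proof -
  have "I (U \<times> T) = I (T \<times> U)" using I_swap[OF assms] by (simp add: fun_eq_iff)
  then show ?thesis unfolding nu_def by simp
qed

lemma main: "\<exists>V. graphon M V \<and> (\<lambda>n. cut_norm M (\<lambda>z. W n z - V z)) \<longlonglongrightarrow> 0"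
proof -
  obtain V0 where V0: "integrable P V0" "\<forall>x. 0 \<le> V0 x"
     "\<forall>E\<in>sets P. (\<integral>z. indicator E z * V0 z \<partial>P) = nu E"
    using density_exists by blast
  have V0m[measurable]: "V0 \<in> borel_measurable P" using V0(1) by auto
  define V where "V z = (V0 z + V0 (snd z, fst z)) / 2" for z
  have intS: "integrable P (\<lambda>z. V0 (snd z, fst z))"
  proof -
    have "integrable P (\<lambda>(x,y). V0 (y,x))" using PS.integrable_product_swap[OF V0(1)] .
    moreover have "(\<lambda>(x,y). V0 (y,x)) = (\<lambda>z. V0 (snd z, fst z))" by (auto simp: fun_eq_iff)
    ultimately show ?thesis by simp
  qed
  have intV: "integrable P V" unfolding V_def using V0(1) intS by auto
  have gV: "graphon M V" unfolding graphon_def using intV by (auto simp: V_def)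
  have rectV: "(\<integral>z. indicator (T \<times> U) z * V z \<partial>P) = nu (T \<times> U)" if TU: "T \<in> sets M" "U \<in> sets M" for T U
  proof -
    have a: "(\<integral>z. indicator (T \<times> U) z * V0 z \<partial>P) = nu (T \<times> U)" using V0(3) TU by auto
    have "(\<integral>z. indicator (T \<times> U) z * V0 (snd z, fst z) \<partial>P)
        = (\<integral>z. indicator (U \<times> T) (snd z, fst z) * V0 (snd z, fst z) \<partial>P)"
      by (intro Bochner_Integration.integral_cong) (auto simp: indicator_def)
    also have "\<dots> = (\<integral>z. indicator (U \<times> T) z * V0 z \<partial>P)"
      using TU integrable_mult_indicator[of "U \<times> T" P V0] V0(1) by (intro swap_int) auto
    also have "\<dots> = nu (T \<times> U)" using V0(3) TU nu_swap by auto
    finally have b: "(\<integral>z. indicator (T \<times> U) z * V0 (snd z, fst z) \<partial>P) = nu (T \<times> U)" .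
    have i1: "integrable P (\<lambda>z. indicator (T \<times> U) z * V0 z)"
      using integrable_mult_indicator[of "T \<times> U" P V0] V0(1) TU by auto
    have i2: "integrable P (\<lambda>z. indicator (T \<times> U) z * V0 (snd z, fst z))"
      using integrable_mult_indicator[of "T \<times> U" P "\<lambda>z. V0 (snd z, fst z)"] intS TU by auto
    have "(\<integral>z. indicator (T \<times> U) z * V z \<partial>P)
        = ((\<integral>z. indicator (T \<times> U) z * V0 z \<partial>P) + (\<integral>z. indicator (T \<times> U) z * V0 (snd z, fst z) \<partial>P)) / 2"
      unfolding V_def using i1 i2 by (simp add: distrib_left add_divide_distrib)
    then show ?thesis using a b by simp
  qed
  have bound: "cut_norm M (\<lambda>z. W n z - V z) \<le> e" if e: "e > 0" and NN: "\<forall>m\<ge>Nn. \<forall>n\<ge>Nn. \<forall>T\<in>sets M. \<forall>U\<in>sets M. \<bar>I (T \<times> U) n - I (T \<times> U) m\<bar> < e" and n: "n \<ge> Nn" for e Nn n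
    unfolding cut_norm_def
  proof (rule cSUP_least)
    show "sets M \<times> sets M \<noteq> {}" by auto
    fix TU assume "TU \<in> sets M \<times> sets M"
    then obtain T U where TU: "TU = (T, U)" "T \<in> sets M" "U \<in> sets M" by auto
    have "(LINT z:T \<times> U|P. W n z - V z) = I (T \<times> U) n - nu (T \<times> U)"
      unfolding set_lebesgue_integral_def I_def using rectV[OF TU(2,3)] TU intI[of "T \<times> U" n]
        integrable_mult_indicator[of "T \<times> U" P V] intV
      by (simp add: right_diff_distrib)
    moreover have "\<bar>I (T \<times> U) n - nu (T \<times> U)\<bar> \<le> e"
    proof -
      have "(\<lambda>m. \<bar>I (T \<times> U) n - I (T \<times> U) m\<bar>) \<longlonglongrightarrow> \<bar>I (T \<times> U) n - nu (T \<times> U)\<bar>"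
        using TU by (intro tendsto_intros nu_lim) auto
      moreover have "\<exists>N. \<forall>m\<ge>N. \<bar>I (T \<times> U) n - I (T \<times> U) m\<bar> \<le> e"
        using NN n TU by (intro exI[of _ Nn]) (auto intro: less_imp_le)
      ultimately show ?thesis
        by (rule LIMSEQ_le_const2)
    qed
    ultimately show "\<bar>LINT z:fst TU \<times> snd TU|P. W n z - V z\<bar> \<le> e" using TU by simp
  qed
  have nonneg: "0 \<le> cut_norm M (\<lambda>z. W n z - V z)" for n
    using cut_bound[of "\<lambda>z. W n z - V z" "{}" "{}"] intW intV by auto
  have "(\<lambda>n. cut_norm M (\<lambda>z. W n z - V z)) \<longlonglongrightarrow> 0"
  proof (rule LIMSEQ_I)
    fix r :: real assume r: "r > 0"
    obtain Nn where NN: "\<forall>m\<ge>Nn. \<forall>n\<ge>Nn. \<forall>T\<in>sets M. \<forall>U\<in>sets M. \<bar>I (T \<times> U) n - I (T \<times> U) m\<bar> < r/2"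
      using cauchyI[of "r/2"] r by auto
    have "norm (cut_norm M (\<lambda>z. W n z - V z) - 0) < r" if "n \<ge> Nn" for n
      using bound[of "r/2" Nn n] NN that r nonneg[of n] by auto
    then show "\<exists>no. \<forall>n\<ge>no. norm (cut_norm M (\<lambda>z. W n z - V z) - 0) < r" by blast
  qed
  then show ?thesis using gV by blast
qed

end


theorem mainTheorem8:
  fixes M :: "'a measure" and A :: "('a \<times> 'a \<Rightarrow> real) set"
  assumes "sigma_finite_measure M"
    and "\<forall>W\<in>A. graphon M W \<and> (AE z in M \<Otimes>\<^sub>M M. W z \<ge> 0)"
    and "semiuniformly_integrable (M \<Otimes>\<^sub>M M) A"
  shows "\<forall>W :: nat \<Rightarrow> 'a \<times> 'a \<Rightarrow> real. (\<forall>n. W n \<in> A) \<and> cut_cauchy M W \<longrightarrow>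
           (\<exists>V. graphon M V \<and> (\<lambda>n. cut_norm M (\<lambda>z. W n z - V z)) \<longlonglongrightarrow> 0)"
proof (intro allI impI)
  fix W :: "nat \<Rightarrow> 'a \<times> 'a \<Rightarrow> real"
  assume W: "(\<forall>n. W n \<in> A) \<and> cut_cauchy M W"
  have "cs M W"
  proof (rule cs.intro)
    show "sigma_finite_measure M" by fact
    show "integrable (M \<Otimes>\<^sub>M M) (W n)" for n using assms(2) W by (auto simp: graphon_def)
    show "AE z in M \<Otimes>\<^sub>M M. W n z = W n (snd z, fst z)" for n using assms(2) W by (auto simp: graphon_def)
    show "AE z in M \<Otimes>\<^sub>M M. W n z \<ge> 0" for n using assms(2) W by auto
    show "cut_cauchy M W" using W by auto
    fix e :: real assume e: "e > 0"
    then obtain B0 where B0: "\<forall>B\<ge>B0. \<forall>F\<in>A.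
        (LINT z : {z \<in> space (M \<Otimes>\<^sub>M M). \<bar>F z\<bar> > B} | M \<Otimes>\<^sub>M M. \<bar>F z\<bar>) \<le> e"
      using assms(3) unfolding semiuniformly_integrable_def by blast
    show "\<exists>B\<ge>0. \<forall>n. (\<integral>z. indicator {z\<in>space (M \<Otimes>\<^sub>M M). \<bar>W n z\<bar> > B} z * \<bar>W n z\<bar> \<partial>(M \<Otimes>\<^sub>M M)) \<le> e"
      using B0[rule_format, of "max B0 0"] W
      by (intro exI[of _ "max B0 0"]) (auto simp: set_lebesgue_integral_def)
  qed
  then show "\<exists>V. graphon M V \<and> (\<lambda>n. cut_norm M (\<lambda>z. W n z - V z)) \<longlonglongrightarrow> 0"
    by (rule cs.main)
qed

end
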